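(* Let $\mathcal I,\mathcal J$ be ideals on $\omega$ with $\mathcal I\subseteq\mathcal J$. For every cardinal $\kappa\le\mathfrak c$ there exists a Hausdorff, separable, sequentially compact, compact (hence normal) space $X$ with $|X|=\kappa$ such that only countably many points of $X$ are isolated and for every sequence $(f_n)$ in $\mathcal C(X)$, if $(f_n)$ is $\mathcal I$-pointwise convergent to $0$ then $(f_n)$ is $\mathcal J$-$\sigma$-uniformly convergent to $0$.
   Context: $\mathfrak c$ denotes the cardinality of $\mathbb R$. An ideal on $\omega$ is a family $\mathcal I\subseteq\mathcal P(\omega)$ closed under finite unions and subsets, containing all finite sets, with $\omega\notin\mathcal I$. A real sequence $(a_n)$ is $\mathcal I$-convergent to $0$ if $\{n:|a_n|\ge\varepsilon\}\in\mathcal I$ for all $\varepsilon>0$. For a sequence $(f_n)$ of real functions on a set $X$: $\mathcal I$-pointwise convergence to $0$ means $(f_n(x))$ is $\mathcal I$-convergent to $0$ for each $x$; $\mathcal J$-uniform means $\{n:\exists x\in X\,(|f_n(x)|\ge\varepsilon)\}\in\mathcal J$ for each $\varepsilon>0$; $\mathcal J$-$\sigma$-uniform means $X=\bigcup_{k\in\omega}X_k$ with $(f_n\restriction X_k)$ $\mathcal J$-uniformly convergent to $0$ for each $k$. $\mathcal C(X)$ = continuous real functions on $X$. *)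

theory Defs
  imports "HOL-Analysis.Analysis" "HOL-Library.Equipollence"
begin

definition ideal_on_nat :: "nat set set \<Rightarrow> bool" where
  "ideal_on_nat \<I> \<longleftrightarrow>
     (\<forall>A\<in>\<I>. \<forall>B\<in>\<I>. A \<union> B \<in> \<I>) \<and>
     (\<forall>A\<in>\<I>. \<forall>B. B \<subseteq> A \<longrightarrow> B \<in> \<I>) \<and>
     (\<forall>A. finite A \<longrightarrow> A \<in> \<I>) \<and>
     UNIV \<notin> \<I>"

definition ideal_conv_zero :: "nat set set \<Rightarrow> (nat \<Rightarrow> real) \<Rightarrow> bool" where
  "ideal_conv_zero \<I> a \<longleftrightarrow> (\<forall>\<epsilon>>0. {n. \<bar>a n\<bar> \<ge> \<epsilon>} \<in> \<I>)"

definition ideal_pointwise_zero :: "nat set set \<Rightarrow> 'a set \<Rightarrow> (nat \<Rightarrow> 'a \<Rightarrow> real) \<Rightarrow> bool" where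
  "ideal_pointwise_zero \<I> S f \<longleftrightarrow> (\<forall>x\<in>S. ideal_conv_zero \<I> (\<lambda>n. f n x))"

definition ideal_uniform_zero :: "nat set set \<Rightarrow> 'a set \<Rightarrow> (nat \<Rightarrow> 'a \<Rightarrow> real) \<Rightarrow> bool" where
  "ideal_uniform_zero \<J> S f \<longleftrightarrow> (\<forall>\<epsilon>>0. {n. \<exists>x\<in>S. \<bar>f n x\<bar> \<ge> \<epsilon>} \<in> \<J>)"

definition ideal_sigma_uniform_zero :: "nat set set \<Rightarrow> 'a set \<Rightarrow> (nat \<Rightarrow> 'a \<Rightarrow> real) \<Rightarrow> bool" where
  "ideal_sigma_uniform_zero \<J> S f \<longleftrightarrow>
     (\<exists>Y :: nat \<Rightarrow> 'a set. S = (\<Union>k. Y k) \<and> (\<forall>k. ideal_uniform_zero \<J> (Y k) f))"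

definition seq_compact_space :: "'a topology \<Rightarrow> bool" where
  "seq_compact_space X \<longleftrightarrow>
     (\<forall>\<sigma> :: nat \<Rightarrow> 'a. (\<forall>n. \<sigma> n \<in> topspace X) \<longrightarrow>
        (\<exists>l r. l \<in> topspace X \<and> strict_mono r \<and> limitin X (\<sigma> \<circ> r) l sequentially))"

definition isolated_points :: "'a topology \<Rightarrow> 'a set" where
  "isolated_points X = {x \<in> topspace X. openin X {x}}"

end

theory Submission
  imports Defs
begin

definition psi_open :: "'a \<Rightarrow> 'a set \<Rightarrow> 'a set \<Rightarrow> ('a \<Rightarrow> 'a set) \<Rightarrow> 'a set \<Rightarrow> bool" where
 "psi_open p D A S U \<longleftrightarrow> U \<subseteq> insert p (D \<union> A) \<and> (\<forall>a\<in>U\<inter>A. finite (S a - U)) \<and>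
    (p \<in> U \<longrightarrow> finite (A - U) \<and> finite (D - U - \<Union>(S ` (A - U))))"

lemma psi_istopology: "istopology (psi_open p D A S)"
  unfolding istopology_def
proof (intro conjI allI impI)
  fix U V assume U: "psi_open p D A S U" and V: "psi_open p D A S V"
  have 1: "\<forall>a\<in>(U\<inter>V)\<inter>A. finite (S a - (U\<inter>V))"
  proof
    fix a assume "a \<in> (U\<inter>V)\<inter>A"
    then have "finite (S a - U)" "finite (S a - V)" using U V unfolding psi_open_def by auto
    moreover have "S a - (U \<inter> V) = (S a - U) \<union> (S a - V)" by blast
    ultimately show "finite (S a - (U\<inter>V))" by simp
  qed
  have 2: "finite (A - U\<inter>V) \<and> finite (D - U\<inter>V - \<Union>(S ` (A - U\<inter>V)))" if "p \<in> U \<inter> V"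
  proof
    have "finite (A - U)" "finite (A - V)" using U V that unfolding psi_open_def by auto
    then show "finite (A - U\<inter>V)" by (simp add: Diff_Int)
    have "finite (D - U - \<Union>(S ` (A - U)))" "finite (D - V - \<Union>(S ` (A - V)))"
      using U V that unfolding psi_open_def by auto
    moreover have "D - U\<inter>V - \<Union>(S ` (A - U\<inter>V)) \<subseteq> (D - U - \<Union>(S ` (A - U))) \<union> (D - V - \<Union>(S ` (A - V)))"
      by blast
    ultimately show "finite (D - U\<inter>V - \<Union>(S ` (A - U\<inter>V)))" by (meson finite_Un finite_subset)
  qed
  show "psi_open p D A S (U \<inter> V)" using U V 1 2 unfolding psi_open_def by blast
next
  fix \<K> assume K: "\<forall>K\<in>\<K>. psi_open p D A S K"
  have 1: "\<forall>a\<in>(\<Union>\<K>)\<inter>A. finite (S a - \<Union>\<K>)"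
  proof
    fix a assume "a \<in> (\<Union>\<K>)\<inter>A"
    then obtain U where "U \<in> \<K>" "a \<in> U" "a \<in> A" by blast
    then have "finite (S a - U)" using K unfolding psi_open_def by auto
    then show "finite (S a - \<Union>\<K>)" by (rule finite_subset[rotated]) (use \<open>U \<in> \<K>\<close> in blast)
  qed
  have 2: "finite (A - \<Union>\<K>) \<and> finite (D - \<Union>\<K> - \<Union>(S ` (A - \<Union>\<K>)))" if pK: "p \<in> \<Union>\<K>"
  proof
    obtain U where U: "U \<in> \<K>" "p \<in> U" using pK by blast
    then have f1: "finite (A - U)" and f2: "finite (D - U - \<Union>(S ` (A - U)))"
      using K unfolding psi_open_def by auto
    show "finite (A - \<Union>\<K>)" by (rule finite_subset[OF _ f1]) (use U in blast)
    have "D - \<Union>\<K> - \<Union>(S ` (A - \<Union>\<K>)) \<subseteq> (D - U - \<Union>(S ` (A - U))) \<union> (\<Union>a\<in>(A - U)\<inter>\<Union>\<K>. S a - \<Union>\<K>)"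
      using U by blast
    moreover have "finite (\<Union>a\<in>(A - U)\<inter>\<Union>\<K>. S a - \<Union>\<K>)"
      by (rule finite_UN_I) (use f1 1 in auto)
    ultimately show "finite (D - \<Union>\<K> - \<Union>(S ` (A - \<Union>\<K>)))" using f2 by (meson finite_Un finite_subset)
  qed
  have 0: "\<Union>\<K> \<subseteq> insert p (D \<union> A)" using K unfolding psi_open_def by blast
  show "psi_open p D A S (\<Union>\<K>)" using 0 1 2 unfolding psi_open_def by blast
qed

locale psi =
  fixes p :: 'a and D A :: "'a set" and S :: "'a \<Rightarrow> 'a set"
  assumes pD: "p \<notin> D" and pA: "p \<notin> A" and AD: "A \<inter> D = {}"
    and Ssub: "\<And>a. a \<in> A \<Longrightarrow> S a \<subseteq> D"
    and Sinf: "\<And>a. a \<in> A \<Longrightarrow> infinite (S a)"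
    and Sad: "\<And>a b. a \<in> A \<Longrightarrow> b \<in> A \<Longrightarrow> a \<noteq> b \<Longrightarrow> finite (S a \<inter> S b)"
    and cD: "countable D"
begin

abbreviation "C \<equiv> insert p (D \<union> A)"
definition "X = topology (psi_open p D A S)"

lemma openX: "openin X = psi_open p D A S"
  unfolding X_def using psi_istopology by (rule topology_inverse')

lemma openC: "psi_open p D A S C"
  unfolding psi_open_def
proof (intro conjI ballI impI)
  show "C \<subseteq> C" by (rule order.refl)
  fix a assume "a \<in> C \<inter> A"
  then have "S a - C = {}" using Ssub by blast
  then show "finite (S a - C)" by (metis finite.emptyI)
next
  have "A - C = {}" by blast
  then show "finite (A - C)" by (metis finite.emptyI)
next
  have "D - C - \<Union>(S ` (A - C)) = {}" by blast
  then show "finite (D - C - \<Union>(S ` (A - C)))" by (metis finite.emptyI)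
qed

lemma topX: "topspace X = C"
  unfolding topspace_def openX using openC unfolding psi_open_def by blast

lemma open_D: assumes d: "d \<in> D" shows "psi_open p D A S {d}"
proof -
  have "{d} \<inter> A = {}" "p \<notin> {d}" using d AD pD by auto
  then show ?thesis unfolding psi_open_def using d by blast
qed

lemma open_cD: assumes d: "d \<in> D" shows "psi_open p D A S (C - {d})"
  unfolding psi_open_def
proof (intro conjI ballI impI)
  show "C - {d} \<subseteq> C" by blast
  fix a assume "a \<in> (C - {d}) \<inter> A"
  then have "S a - (C - {d}) \<subseteq> {d}" using Ssub by blast
  then show "finite (S a - (C - {d}))" using finite_subset by blast
next
  have "A - (C - {d}) = {}" using d AD by blast
  then show "finite (A - (C - {d}))" by (metis finite.emptyI)
next
  have "D - (C - {d}) - \<Union>(S ` (A - (C - {d}))) \<subseteq> {d}" by blast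
  then show "finite (D - (C - {d}) - \<Union>(S ` (A - (C - {d}))))" using finite_subset by blast
qed

lemma open_nb: assumes a: "a \<in> A" shows "psi_open p D A S (insert a (S a))"
proof -
  have UA: "insert a (S a) \<inter> A = {a}" using a Ssub[OF a] AD by blast
  have pU: "p \<notin> insert a (S a)" using a Ssub[OF a] pD pA by blast
  have e: "S a - insert a (S a) = {}" by blast
  show ?thesis unfolding psi_open_def
  proof (intro conjI ballI impI)
    show "insert a (S a) \<subseteq> C" using a Ssub[OF a] by blast
    fix x assume "x \<in> insert a (S a) \<inter> A"
    then have "x = a" using UA by blast
    then show "finite (S x - insert a (S a))" using e by (metis finite.emptyI)
  next
    assume "p \<in> insert a (S a)" then show "finite (A - insert a (S a))" using pU by blast
  next
    assume "p \<in> insert a (S a)" then show "finite (D - insert a (S a) - \<Union> (S ` (A - insert a (S a))))" using pU by blast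
  qed
qed

lemma open_cnb: assumes a: "a \<in> A" shows "psi_open p D A S (C - insert a (S a))"
proof -
  have "a \<notin> D" using a AD by blast
  have fb: "finite (S b - (C - insert a (S a)))" if "b \<in> A" "b \<in> C - insert a (S a)" for b
  proof -
    have "a \<notin> S b" using Ssub[OF that(1)] a AD by blast
    then have "S b - (C - insert a (S a)) \<subseteq> S b \<inter> S a" using Ssub[OF that(1)] by blast
    moreover have "b \<noteq> a" using that by blast
    ultimately show ?thesis using Sad[OF that(1) a] by (meson finite_subset)
  qed
  have e1: "A - (C - insert a (S a)) = {a}" using a Ssub[OF a] AD by auto
  have e2: "D - (C - insert a (S a)) - \<Union>(S ` {a}) = {}" using \<open>a \<notin> D\<close> by auto
  show ?thesis unfolding psi_open_def
  proof (intro conjI ballI impI)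
    show "C - insert a (S a) \<subseteq> C" by blast
  next
    fix b assume "b \<in> (C - insert a (S a)) \<inter> A"
    then show "finite (S b - (C - insert a (S a)))" using fb by blast
  next
    show "finite (A - (C - insert a (S a)))" using e1 by simp
  next
    show "finite (D - (C - insert a (S a)) - \<Union> (S ` (A - (C - insert a (S a)))))"
      using e1 e2 by (metis finite.emptyI)
  qed
qed

lemma open_sep: assumes a: "a \<in> A" and b: "b \<in> A" and ab: "a \<noteq> b"
  shows "psi_open p D A S (insert a (S a - S b))"
proof -
  have "S a - insert a (S a - S b) \<subseteq> S a \<inter> S b" by auto
  then have fin: "finite (S a - insert a (S a - S b))" using Sad[OF a b ab] by (meson finite_subset)
  have UA: "insert a (S a - S b) \<inter> A = {a}" using a Ssub[OF a] AD by blast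
  have pU: "p \<notin> insert a (S a - S b)" using a Ssub[OF a] pD pA by blast
  show ?thesis unfolding psi_open_def
  proof (intro conjI ballI impI)
    show "insert a (S a - S b) \<subseteq> C" using a Ssub[OF a] by blast
    fix x assume "x \<in> insert a (S a - S b) \<inter> A"
    then have "x = a" using UA by blast
    then show "finite (S x - insert a (S a - S b))" using fin by simp
  next
    assume "p \<in> insert a (S a - S b)" then show "finite (A - insert a (S a - S b))" using pU by blast
  next
    assume "p \<in> insert a (S a - S b)" then show "finite (D - insert a (S a - S b) - \<Union> (S ` (A - insert a (S a - S b))))" using pU by blast
  qed
qed

lemma hsep: assumes "psi_open p D A S U" "psi_open p D A S V" "x \<in> U" "y \<in> V" "U \<inter> V = {}"
  shows "\<exists>U V. psi_open p D A S U \<and> psi_open p D A S V \<and> x \<in> U \<and> y \<in> V \<and> U \<inter> V = {}"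
  using assms by blast

lemma Hausdorff: "Hausdorff_space X"
  unfolding Hausdorff_space_def topX openX disjnt_def
proof (intro allI impI)
  fix x y assume H: "x \<in> C \<and> y \<in> C \<and> x \<noteq> y"
  show "\<exists>U V. psi_open p D A S U \<and> psi_open p D A S V \<and> x \<in> U \<and> y \<in> V \<and> U \<inter> V = {}"
  proof (cases "x \<in> D")
    case True
    show ?thesis by (rule hsep[OF open_D[OF True] open_cD[OF True]]) (use H in blast)+
  next
    case xD: False
    show ?thesis
    proof (cases "y \<in> D")
      case True
      show ?thesis by (rule hsep[OF open_cD[OF True] open_D[OF True]]) (use H in blast)+
    next
      case yD: False
      show ?thesis
      proof (cases "x = p")
        case True
        then have yA: "y \<in> A" using H yD by auto
        have "p \<notin> insert y (S y)" using pA pD Ssub[OF yA] yA by blast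
        then show ?thesis by (intro hsep[OF open_cnb[OF yA] open_nb[OF yA]]) (use H True in blast)+
      next
        case xp: False
        then have xA: "x \<in> A" using H xD by auto
        show ?thesis
        proof (cases "y = p")
          case True
          have "p \<notin> insert x (S x)" using pA pD Ssub[OF xA] xA by blast
          then show ?thesis by (intro hsep[OF open_nb[OF xA] open_cnb[OF xA]]) (use H True in blast)+
        next
          case False
          then have yA: "y \<in> A" using H yD by auto
          have "y \<notin> S x" "x \<notin> S y" using Ssub[OF xA] Ssub[OF yA] AD xA yA by blast+
          then have "insert x (S x - S y) \<inter> insert y (S y) = {}"
            using H by blast
          then show ?thesis by (intro hsep[OF open_sep[OF xA yA] open_nb[OF yA]]) (use H in blast)+
        qed
      qed
    qed
  qed
qed

lemma dense: "X closure_of (insert p D) = topspace X"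
proof
  show "X closure_of insert p D \<subseteq> topspace X" by (rule closure_of_subset_topspace)
  show "topspace X \<subseteq> X closure_of insert p D"
  proof
    fix x assume x: "x \<in> topspace X"
    show "x \<in> X closure_of insert p D"
    proof (cases "x \<in> insert p D")
      case True
      have "insert p D \<subseteq> topspace X" using topX by blast
      then show ?thesis using True closure_of_subset by blast
    next
      case False
      then have xA: "x \<in> A" using x topX by auto
      show ?thesis unfolding in_closure_of
      proof (intro conjI allI impI)
        show "x \<in> topspace X" by fact
        fix T assume T: "x \<in> T \<and> openin X T"
        then have "finite (S x - T)" using xA unfolding openX psi_open_def by auto
        then have "S x \<inter> T \<noteq> {}" using Sinf[OF xA] by (metis Diff_Int2 Diff_empty Int_absorb inf_commute)
        then show "\<exists>y. y \<in> insert p D \<and> y \<in> T" using Ssub[OF xA] by blast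
      qed
    qed
  qed
qed

lemma separable: "separable_space X"
  unfolding separable_space_def
  using dense cD topX by (intro exI[of _ "insert p D"]) auto

end

lemma limit_from_set:
  fixes X :: "'a topology" and \<sigma> :: "nat \<Rightarrow> 'a"
  assumes l: "l \<in> topspace X" and N: "infinite N"
    and H: "\<And>U. openin X U \<Longrightarrow> l \<in> U \<Longrightarrow> finite {n\<in>N. \<sigma> n \<notin> U}"
  shows "\<exists>r. strict_mono r \<and> limitin X (\<sigma> \<circ> r) l sequentially"
proof (intro exI conjI)
  let ?r = "enumerate N"
  show sm: "strict_mono ?r" using N by (rule strict_mono_enumerate)
  show "limitin X (\<sigma> \<circ> ?r) l sequentially"
    unfolding limitin_def
  proof (intro conjI allI impI)
    show "l \<in> topspace X" by fact
    fix U assume U: "openin X U \<and> l \<in> U"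
    have "{n. \<not> (\<sigma> \<circ> ?r) n \<in> U} \<subseteq> ?r -` {n\<in>N. \<sigma> n \<notin> U}"
      using enumerate_in_set[OF N] by auto
    moreover have "finite (?r -` {n\<in>N. \<sigma> n \<notin> U})"
      by (rule finite_vimageI) (use H U strict_mono_imp_inj_on[OF sm] in auto)
    ultimately have "finite {n. \<not> (\<sigma> \<circ> ?r) n \<in> U}" by (rule finite_subset)
    then show "\<forall>\<^sub>F n in sequentially. (\<sigma> \<circ> ?r) n \<in> U"
      unfolding cofinite_eq_sequentially[symmetric] eventually_cofinite .
  qed
qed

context psi begin
lemma compact: "compact_space X"
  unfolding compact_space_alt topX openX
proof (intro allI impI)
  fix \<U> assume H: "(\<forall>U\<in>\<U>. psi_open p D A S U) \<and> C \<subseteq> \<Union>\<U>"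
  have "\<forall>c\<in>C. \<exists>U\<in>\<U>. c \<in> U" using H by blast
  then obtain V where V: "\<forall>c\<in>C. V c \<in> \<U> \<and> c \<in> V c" by metis
  define U0 where "U0 = V p"
  have U0: "psi_open p D A S U0" "p \<in> U0" using V H unfolding U0_def by auto
  define A0 where "A0 = A - U0"
  define F0 where "F0 = D - U0 - \<Union>(S ` A0)"
  define G where "G = (\<Union>a\<in>A0. S a - V a)"
  have fA0: "finite A0" and fF0: "finite F0" using U0 unfolding psi_open_def A0_def F0_def by auto
  have "finite (S a - V a)" if "a \<in> A0" for a
  proof -
    have "a \<in> C" "a \<in> A" using that unfolding A0_def by auto
    then have "psi_open p D A S (V a)" "a \<in> V a" using V H by auto
    then show ?thesis using \<open>a \<in> A\<close> unfolding psi_open_def by blast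
  qed
  then have fG: "finite G" unfolding G_def using fA0 by blast
  have sub: "{p} \<union> A0 \<union> F0 \<union> G \<subseteq> C" unfolding A0_def F0_def G_def using Ssub by blast
  define F where "F = V ` ({p} \<union> A0 \<union> F0 \<union> G)"
  have "finite F" unfolding F_def using fA0 fF0 fG by simp
  moreover have "F \<subseteq> \<U>" unfolding F_def using sub V by blast
  moreover have "C \<subseteq> \<Union>F"
  proof
    fix c assume c: "c \<in> C"
    have inF: "V x \<in> F" if "x \<in> {p} \<union> A0 \<union> F0 \<union> G" for x using that unfolding F_def by blast
    have inV: "x \<in> V x" if "x \<in> {p} \<union> A0 \<union> F0 \<union> G" for x using that sub V by blast
    show "c \<in> \<Union>F"
    proof (cases "c \<in> U0")
      case True
      then show ?thesis using inF[of p] unfolding U0_def by blast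
    next
      case False
      show ?thesis
      proof (cases "c \<in> A")
        case True
        then have "c \<in> A0" using False unfolding A0_def by blast
        then show ?thesis using inF[of c] inV[of c] by blast
      next
        case cA: False
        then have cD: "c \<in> D" using c False U0(2) by blast
        show ?thesis
        proof (cases "c \<in> \<Union>(S ` A0)")
          case True
          then obtain a where a: "a \<in> A0" "c \<in> S a" by blast
          show ?thesis
          proof (cases "c \<in> V a")
            case True
            then show ?thesis using inF[of a] a by blast
          next
            case False
            then have "c \<in> G" unfolding G_def using a by blast
            then show ?thesis using inF[of c] inV[of c] by blast
          qed
        next
          case False
          then have "c \<in> F0" unfolding F0_def using cD \<open>c \<notin> U0\<close> by blast
          then show ?thesis using inF[of c] inV[of c] by blast
        qed
      qed
    qed
  qed
  ultimately show "\<exists>\<F>. finite \<F> \<and> \<F> \<subseteq> \<U> \<and> C \<subseteq> \<Union>\<F>" by blast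
qed

lemma isolated: "countable (isolated_points X)"
proof -
  have "isolated_points X \<subseteq> insert p D"
  proof
    fix x assume x: "x \<in> isolated_points X"
    then have "x \<in> topspace X \<and> openin X {x}" by (simp add: isolated_points_def)
    then have xC: "x \<in> C" and o: "psi_open p D A S {x}" by (simp_all only: topX openX)
    show "x \<in> insert p D"
    proof (rule ccontr)
      assume "x \<notin> insert p D"
      then have xA: "x \<in> A" using xC by blast
      then have "finite (S x - {x})" using o unfolding psi_open_def by blast
      then have "finite (S x)" by (metis finite_Diff2 finite.emptyI finite_insert)
      then show False using Sinf[OF xA] by blast
    qed
  qed
  then show ?thesis by (rule countable_subset) (simp add: cD)
qed

lemma seqc: "seq_compact_space X"
  unfolding seq_compact_space_def
proof (intro allI impI)
  fix \<sigma> :: "nat \<Rightarrow> 'a" assume \<sigma>: "\<forall>n. \<sigma> n \<in> topspace X"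
  then have \<sigma>C: "\<And>n. \<sigma> n \<in> C" using topX by auto
  show "\<exists>l r. l \<in> topspace X \<and> strict_mono r \<and> limitin X (\<sigma> \<circ> r) l sequentially"
  proof (cases "\<exists>x. infinite {n. \<sigma> n = x}")
    case True
    then obtain x where x: "infinite {n. \<sigma> n = x}" by blast
    then obtain n0 where "\<sigma> n0 = x" by (metis (mono_tags) empty_Collect_eq finite.emptyI)
    then have xX: "x \<in> topspace X" using \<sigma> by blast
    have "\<exists>r. strict_mono r \<and> limitin X (\<sigma> \<circ> r) x sequentially"
    proof (rule limit_from_set[OF xX x])
      fix U assume "openin X U" "x \<in> U"
      then have "{n \<in> {n. \<sigma> n = x}. \<sigma> n \<notin> U} = {}" by blast
      then show "finite {n \<in> {n. \<sigma> n = x}. \<sigma> n \<notin> U}" by (metis finite.emptyI)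
    qed
    then show ?thesis using xX by blast
  next
    case False
    then have fib: "\<And>x. finite {n. \<sigma> n = x}" by blast
    have fpre: "finite {n. \<sigma> n \<in> T}" if "finite T" for T
    proof -
      have "{n. \<sigma> n \<in> T} = (\<Union>x\<in>T. {n. \<sigma> n = x})" by blast
      then show ?thesis using that fib by simp
    qed
    show ?thesis
    proof (cases "\<exists>a\<in>A. infinite {n. \<sigma> n \<in> S a}")
      case True
      then obtain a where a: "a \<in> A" "infinite {n. \<sigma> n \<in> S a}" by blast
      have aX: "a \<in> topspace X" using a topX by blast
      have "\<exists>r. strict_mono r \<and> limitin X (\<sigma> \<circ> r) a sequentially"
      proof (rule limit_from_set[OF aX a(2)])
        fix U assume "openin X U" "a \<in> U"
        then have "finite (S a - U)" using a(1) unfolding openX psi_open_def by blast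
        then have "finite {n. \<sigma> n \<in> S a - U}" by (rule fpre)
        moreover have "{n \<in> {n. \<sigma> n \<in> S a}. \<sigma> n \<notin> U} \<subseteq> {n. \<sigma> n \<in> S a - U}" by blast
        ultimately show "finite {n \<in> {n. \<sigma> n \<in> S a}. \<sigma> n \<notin> U}" using finite_subset by blast
      qed
      then show ?thesis using aX by blast
    next
      case False
      then have finS: "\<And>a. a \<in> A \<Longrightarrow> finite {n. \<sigma> n \<in> S a}" by blast
      have pX: "p \<in> topspace X" using topX by blast
      have "\<exists>r. strict_mono r \<and> limitin X (\<sigma> \<circ> r) p sequentially"
      proof (rule limit_from_set[OF pX infinite_UNIV_nat])
        fix U assume U: "openin X U" "p \<in> U"
        then have o: "psi_open p D A S U" using openX by simp
        then have f1: "finite (A - U)" and f2: "finite (D - U - \<Union>(S ` (A - U)))"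
          using U(2) unfolding psi_open_def by blast+
        have "{n \<in> UNIV. \<sigma> n \<notin> U} \<subseteq> {n. \<sigma> n \<in> A - U} \<union> {n. \<sigma> n \<in> D - U - \<Union>(S ` (A - U))}
               \<union> (\<Union>a\<in>A - U. {n. \<sigma> n \<in> S a})"
        proof
          fix n assume "n \<in> {n \<in> UNIV. \<sigma> n \<notin> U}"
          then have nU: "\<sigma> n \<notin> U" by simp
          then have "\<sigma> n \<noteq> p" using U(2) by metis
          then have "\<sigma> n \<in> D \<or> \<sigma> n \<in> A" using \<sigma>C[of n] by simp
          then show "n \<in> {n. \<sigma> n \<in> A - U} \<union> {n. \<sigma> n \<in> D - U - \<Union>(S ` (A - U))}
               \<union> (\<Union>a\<in>A - U. {n. \<sigma> n \<in> S a})"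
          proof
            assume "\<sigma> n \<in> A" then show ?thesis using nU by simp
          next
            assume dn: "\<sigma> n \<in> D"
            show ?thesis
            proof (cases "\<sigma> n \<in> \<Union>(S ` (A - U))")
              case True
              then obtain a where "a \<in> A - U" "\<sigma> n \<in> S a" by blast
              then show ?thesis by blast
            next
              case False
              then show ?thesis using dn nU by simp
            qed
          qed
        qed
        moreover have "finite (\<Union>a\<in>A - U. {n. \<sigma> n \<in> S a})"
          using f1 finS by blast
        ultimately show "finite {n \<in> UNIV. \<sigma> n \<notin> U}"
          using fpre[OF f1] fpre[OF f2] by (meson finite_Un finite_subset)
      qed
      then show ?thesis using pX by blast
    qed
  qed
qed

lemma fun_prop:
  fixes I J :: "nat set set" and f :: "nat \<Rightarrow> 'a \<Rightarrow> real"
  assumes IJ: "I \<subseteq> J" and J: "ideal_on_nat J"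
    and cont: "\<forall>n. continuous_map X euclideanreal (f n)"
    and pw: "ideal_pointwise_zero I (topspace X) f"
  shows "ideal_sigma_uniform_zero J (topspace X) f"
proof -
  have Jdown: "B \<in> J" if "A' \<in> J" "B \<subseteq> A'" for A' B using J that unfolding ideal_on_nat_def by blast
  have ptJ: "{n. \<epsilon> \<le> \<bar>f n x\<bar>} \<in> J" if "x \<in> C" "\<epsilon> > 0" for x \<epsilon>
    using pw that IJ topX unfolding ideal_pointwise_zero_def ideal_conv_zero_def by blast
  define G where "G = {a\<in>A. \<exists>n. f n a \<noteq> f n p}"
  have finB: "finite {a\<in>A. inverse (real (Suc m)) \<le> \<bar>f n a - f n p\<bar>}" for n m
  proof -
    define V where "V = {x \<in> topspace X. f n x \<in> ball (f n p) (inverse (real (Suc m)))}"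
    have "openin X V" unfolding V_def
      by (rule openin_continuous_map_preimage[OF cont[rule_format]]) (simp add: open_openin[symmetric])
    moreover have "p \<in> V" unfolding V_def using topX by auto
    ultimately have "finite (A - V)" unfolding openX psi_open_def by blast
    moreover have "{a\<in>A. inverse (real (Suc m)) \<le> \<bar>f n a - f n p\<bar>} \<subseteq> A - V"
      unfolding V_def by (auto simp: dist_real_def abs_minus_commute)
    ultimately show ?thesis using finite_subset by blast
  qed
  have "G \<subseteq> (\<Union>n. \<Union>m. {a\<in>A. inverse (real (Suc m)) \<le> \<bar>f n a - f n p\<bar>})"
  proof
    fix a assume "a \<in> G"
    then obtain n where a: "a \<in> A" "f n a \<noteq> f n p" unfolding G_def by blast
    then have "\<bar>f n a - f n p\<bar> > 0" by simp
    then obtain k where k: "k > 0" "inverse (real k) < \<bar>f n a - f n p\<bar>"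
      using ex_inverse_of_nat_less by blast
    then have "k = Suc (k - 1)" by simp
    then have "inverse (real (Suc (k - 1))) \<le> \<bar>f n a - f n p\<bar>" using k by (metis less_imp_le)
    then show "a \<in> (\<Union>n. \<Union>m. {a\<in>A. inverse (real (Suc m)) \<le> \<bar>f n a - f n p\<bar>})" using a by blast
  qed
  moreover have "countable (\<Union>n. \<Union>m. {a\<in>A. inverse (real (Suc m)) \<le> \<bar>f n a - f n p\<bar>})"
  proof (rule countable_UN[OF countableI_type])
    fix n show "countable (\<Union>m. {a\<in>A. inverse (real (Suc m)) \<le> \<bar>f n a - f n p\<bar>})"
      by (rule countable_UN[OF countableI_type]) (rule countable_finite[OF finB])
  qed
  ultimately have cG: "countable G" by (rule countable_subset)
  define Q where "Q = D \<union> G"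
  have cQ: "countable Q" unfolding Q_def using cD cG by simp
  have QC: "Q \<subseteq> C" unfolding Q_def G_def by blast
  define P0 where "P0 = insert p (A - G)"
  have P0C: "P0 \<subseteq> C" unfolding P0_def by blast
  have P0f: "\<And>x n. x \<in> P0 \<Longrightarrow> f n x = f n p" unfolding P0_def G_def by blast
  define Y where "Y k = (if k = 0 then P0 else Q \<inter> {from_nat_into Q (k - 1)})" for k
  have cover: "topspace X = (\<Union>k. Y k)"
  proof
    show "topspace X \<subseteq> (\<Union>k. Y k)"
    proof
      fix x assume "x \<in> topspace X"
      then have x: "x \<in> C" using topX by simp
      show "x \<in> (\<Union>k. Y k)"
      proof (cases "x \<in> P0")
        case True
        then have "x \<in> Y 0" unfolding Y_def by simp
        then show ?thesis by blast
      next
        case False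
        then have xQ: "x \<in> Q" using x unfolding P0_def Q_def by blast
        then have "from_nat_into Q (Suc (to_nat_on Q x) - 1) = x" using cQ by simp
        then have "x \<in> Y (Suc (to_nat_on Q x))" unfolding Y_def using xQ by simp
        then show ?thesis by blast
      qed
    qed
    show "(\<Union>k. Y k) \<subseteq> topspace X" unfolding topX Y_def using P0C QC by auto
  qed
  have unif: "ideal_uniform_zero J (Y k) f" for k
    unfolding ideal_uniform_zero_def
  proof (intro allI impI)
    fix \<epsilon> :: real assume e: "\<epsilon> > 0"
    have "\<exists>x0\<in>C. {n. \<exists>x\<in>Y k. \<epsilon> \<le> \<bar>f n x\<bar>} \<subseteq> {n. \<epsilon> \<le> \<bar>f n x0\<bar>}"
    proof (cases "k = 0")
      case True
      then show ?thesis using P0f by (intro bexI[of _ p]) (auto simp: Y_def)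
    next
      case False
      show ?thesis
      proof (cases "from_nat_into Q (k - 1) \<in> Q")
        case True
        then show ?thesis using QC False by (intro bexI[of _ "from_nat_into Q (k - 1)"]) (auto simp: Y_def)
      next
        case F2: False
        then show ?thesis using False by (intro bexI[of _ p]) (auto simp: Y_def)
      qed
    qed
    then obtain x0 where "x0 \<in> C" "{n. \<exists>x\<in>Y k. \<epsilon> \<le> \<bar>f n x\<bar>} \<subseteq> {n. \<epsilon> \<le> \<bar>f n x0\<bar>}" by blast
    then show "{n. \<exists>x\<in>Y k. \<epsilon> \<le> \<bar>f n x\<bar>} \<in> J" using ptJ[OF _ e] Jdown by blast
  qed
  show ?thesis unfolding ideal_sigma_uniform_zero_def using cover unif by blast
qed

lemma all_props:
  fixes I J :: "nat set set"
  assumes IJ: "I \<subseteq> J" and J: "ideal_on_nat J"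
  shows "\<exists>X :: 'a topology.
           topspace X = C \<and>
           Hausdorff_space X \<and> separable_space X \<and> seq_compact_space X \<and>
           compact_space X \<and> normal_space X \<and>
           countable (isolated_points X) \<and>
           (\<forall>f :: nat \<Rightarrow> 'a \<Rightarrow> real.
              (\<forall>n. continuous_map X euclideanreal (f n)) \<longrightarrow>
              ideal_pointwise_zero I (topspace X) f \<longrightarrow>
              ideal_sigma_uniform_zero J (topspace X) f)"
proof (intro exI[of _ X] conjI allI impI)
  show "topspace X = C" by (rule topX)
  show "Hausdorff_space X" by (rule Hausdorff)
  show "separable_space X" by (rule separable)
  show "seq_compact_space X" by (rule seqc)
  show "compact_space X" by (rule compact)
  show "normal_space X" using compact Hausdorff by (intro compact_Hausdorff_or_regular_imp_normal_space) auto
  show "countable (isolated_points X)" by (rule isolated)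
  fix f :: "nat \<Rightarrow> 'a \<Rightarrow> real"
  assume "\<forall>n. continuous_map X euclideanreal (f n)" "ideal_pointwise_zero I (topspace X) f"
  then show "ideal_sigma_uniform_zero J (topspace X) f" using fun_prop[OF IJ J] by blast
qed

end

lemma floor_eq_close:
  fixes x y :: real
  assumes "\<lfloor>x\<rfloor> = \<lfloor>y\<rfloor>" shows "\<bar>x - y\<bar> < 1"
proof -
  have "real_of_int \<lfloor>x\<rfloor> \<le> x" "x < real_of_int \<lfloor>x\<rfloor> + 1" by linarith+
  moreover have "real_of_int \<lfloor>y\<rfloor> \<le> y" "y < real_of_int \<lfloor>y\<rfloor> + 1" by linarith+
  ultimately show ?thesis using assms by linarith
qed

lemma finite_floor_eq:
  fixes u v :: real
  assumes "u \<noteq> v"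
  shows "finite {n::nat. \<lfloor>u * 2 ^ n\<rfloor> = \<lfloor>v * 2 ^ n\<rfloor>}"
proof -
  define d where "d = \<bar>u - v\<bar>"
  have d: "d > 0" using assms unfolding d_def by simp
  obtain N :: nat where N: "1 / d < 2 ^ N" using real_arch_pow[of 2 "1 / d"] by auto
  have "{n::nat. \<lfloor>u * 2 ^ n\<rfloor> = \<lfloor>v * 2 ^ n\<rfloor>} \<subseteq> {..<N}"
  proof
    fix n assume "n \<in> {n::nat. \<lfloor>u * 2 ^ n\<rfloor> = \<lfloor>v * 2 ^ n\<rfloor>}"
    then have "\<bar>u * 2 ^ n - v * 2 ^ n\<bar> < 1" using floor_eq_close by blast
    also have "\<bar>u * 2 ^ n - v * 2 ^ n\<bar> = d * 2 ^ n" unfolding d_def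
      by (simp add: abs_mult left_diff_distrib[symmetric])
    finally have lt: "d * 2 ^ n < 1" .
    show "n \<in> {..<N}"
    proof (rule ccontr)
      assume "n \<notin> {..<N}"
      then have "N \<le> n" by simp
      then have "(2::real) ^ N \<le> 2 ^ n" by (rule power_increasing) simp
      then have "1 / d < 2 ^ n" using N by linarith
      then have "1 < d * 2 ^ n" using d by (simp add: field_simps)
      then show False using lt by linarith
    qed
  qed
  then show ?thesis using finite_subset by blast
qed

theorem theorem6p4:
  fixes \<I> \<J> :: "nat set set" and K :: "'a set"
  assumes "ideal_on_nat \<I>" and "ideal_on_nat \<J>" and "\<I> \<subseteq> \<J>"
    and "K \<lesssim> (UNIV :: real set)"
  shows "\<exists>X :: 'a topology.
           topspace X = K \<and>
           Hausdorff_space X \<and> separable_space X \<and> seq_compact_space X \<and>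
           compact_space X \<and> normal_space X \<and>
           countable (isolated_points X) \<and>
           (\<forall>f :: nat \<Rightarrow> 'a \<Rightarrow> real.
              (\<forall>n. continuous_map X euclideanreal (f n)) \<longrightarrow>
              ideal_pointwise_zero \<I> (topspace X) f \<longrightarrow>
              ideal_sigma_uniform_zero \<J> (topspace X) f)"
proof (cases "K = {}")
  case True
  let ?X = "discrete_topology K"
  have tX: "topspace ?X = {}" using True by simp
  show ?thesis
  proof (intro exI[of _ ?X] conjI allI impI)
    show "topspace ?X = K" by simp
    show "Hausdorff_space ?X" by simp
    show "separable_space ?X" unfolding separable_space_def using tX by auto
    show "seq_compact_space ?X" unfolding seq_compact_space_def using tX by auto
    show cs: "compact_space ?X" using True by (simp add: compact_space_discrete_topology)
    show "normal_space ?X" using cs by (intro compact_Hausdorff_or_regular_imp_normal_space) auto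
    show "countable (isolated_points ?X)" unfolding isolated_points_def using tX by simp
    fix f :: "nat \<Rightarrow> 'a \<Rightarrow> real"
    have "{} \<in> \<J>" using assms(2) unfolding ideal_on_nat_def by blast
    then have "ideal_uniform_zero \<J> {} f" unfolding ideal_uniform_zero_def by simp
    then show "ideal_sigma_uniform_zero \<J> (topspace ?X) f"
      unfolding ideal_sigma_uniform_zero_def tX by (intro exI[of _ "\<lambda>k. {}"]) simp
  qed
next
  case Kne: False
  show ?thesis
  proof (cases "finite K")
    case True
    obtain p where p: "p \<in> K" using Kne by blast
    interpret psi p "K - {p}" "{}" "\<lambda>_. {}"
      by unfold_locales (use True countable_finite in auto)
    have "insert p ((K - {p}) \<union> {}) = K" using p by blast
    then show ?thesis using all_props[OF assms(3) assms(2)] by simp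
  next
    case False
    obtain e :: "nat \<Rightarrow> 'a" where e: "inj e" "range e \<subseteq> K"
      using infinite_countable_subset[OF False] by blast
    obtain g :: "'a \<Rightarrow> real" where g: "inj_on g K" using assms(4) unfolding lepoll_def by blast
    define p where "p = e 0"
    define D where "D = range (\<lambda>n. e (Suc n))"
    define A where "A = K - D - {p}"
    define \<psi> where "\<psi> x = e (Suc (to_nat (x :: nat \<times> int)))" for x
    have inj\<psi>: "inj \<psi>"
    proof (rule injI)
      fix x y assume "\<psi> x = \<psi> y"
      then have "Suc (to_nat x) = Suc (to_nat y)" unfolding \<psi>_def by (rule injD[OF e(1)])
      then have "to_nat x = to_nat y" by simp
      then show "x = y" by (rule injD[OF inj_to_nat])
    qed
    define S where "S a = range (\<lambda>n. \<psi> (n, \<lfloor>g a * 2 ^ n\<rfloor>))" for a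
    interpret psi p D A S
    proof
      show "p \<notin> D" unfolding p_def D_def using e(1) by (auto simp: inj_def)
      show "p \<notin> A" unfolding A_def by blast
      show "A \<inter> D = {}" unfolding A_def by blast
      fix a assume a: "a \<in> A"
      show "S a \<subseteq> D" unfolding S_def D_def \<psi>_def by blast
      have "inj (\<lambda>n. \<psi> (n, \<lfloor>g a * 2 ^ n\<rfloor>))" using inj\<psi> by (simp add: inj_def)
      then show "infinite (S a)" unfolding S_def by (rule range_inj_infinite)
    next
      fix a b assume a: "a \<in> A" and b: "b \<in> A" and ab: "a \<noteq> b"
      have "g a \<noteq> g b" using g a b ab unfolding A_def by (meson DiffD1 inj_on_contraD)
      then have fin: "finite {n::nat. \<lfloor>g a * 2 ^ n\<rfloor> = \<lfloor>g b * 2 ^ n\<rfloor>}" by (rule finite_floor_eq)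
      have "S a \<inter> S b \<subseteq> (\<lambda>n. \<psi> (n, \<lfloor>g a * 2 ^ n\<rfloor>)) ` {n::nat. \<lfloor>g a * 2 ^ n\<rfloor> = \<lfloor>g b * 2 ^ n\<rfloor>}"
      proof
        fix x assume "x \<in> S a \<inter> S b"
        then obtain n m where x: "x = \<psi> (n, \<lfloor>g a * 2 ^ n\<rfloor>)" "x = \<psi> (m, \<lfloor>g b * 2 ^ m\<rfloor>)"
          unfolding S_def by blast
        then have "(n, \<lfloor>g a * 2 ^ n\<rfloor>) = (m, \<lfloor>g b * 2 ^ m\<rfloor>)" by (metis injD[OF inj\<psi>])
        then show "x \<in> (\<lambda>n. \<psi> (n, \<lfloor>g a * 2 ^ n\<rfloor>)) ` {n::nat. \<lfloor>g a * 2 ^ n\<rfloor> = \<lfloor>g b * 2 ^ n\<rfloor>}"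
          using x by auto
      qed
      then show "finite (S a \<inter> S b)" using fin finite_subset by blast
    next
      show "countable D" unfolding D_def by simp
    qed
    have "insert p (D \<union> A) = K" unfolding A_def D_def p_def using e(2) by blast
    then show ?thesis using all_props[OF assms(3) assms(2)] by simp
  qed
qed

end
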